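(* Let $A$, $\tilde R$, $D$ and $R$ be real $n\times n$ matrices. If $A$ and $D$ are diagonal and $\tilde R$ is orthogonal, then $$\mathrm{Tr}\left[A R D\tilde R\right]\le \sum_j |d_j|\Big(\sum_i a_i^2 r_{ij}^2\Big)^{1/2},$$ where $a_j$ and $d_j$ are the diagonal entries of $A$ and $D$ respectively and $r_{ij}$ is the $(i,j)$ entry of $R$. *)

theory Defs
  imports "HOL-Analysis.Analysis"
begin

definition diagonal_matrix :: "'a::zero^'n^'n \<Rightarrow> bool" where
  "diagonal_matrix M \<longleftrightarrow> (\<forall>i j. i \<noteq> j \<longrightarrow> M $ i $ j = 0)"

end

theory Submission
  imports Defs
begin

lemma diag_left: "diagonal_matrix (A::real^'n^'n) \<Longrightarrow> (A ** B) $ i $ k = A$i$i * B$i$k"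
proof -
  assume d: "diagonal_matrix A"
  have "(A ** B) $ i $ k = (\<Sum>l\<in>UNIV. (if l = i then A$i$i * B$i$k else 0))"
    unfolding matrix_matrix_mult_def vec_lambda_beta
    by (intro sum.cong refl) (use d in \<open>auto simp: diagonal_matrix_def\<close>)
  then show ?thesis by simp
qed

lemma diag_right: "diagonal_matrix (D::real^'n^'n) \<Longrightarrow> (B ** D) $ i $ k = B$i$k * D$k$k"
proof -
  assume d: "diagonal_matrix D"
  have "(B ** D) $ i $ k = (\<Sum>l\<in>UNIV. (if l = k then B$i$k * D$k$k else 0))"
    unfolding matrix_matrix_mult_def vec_lambda_beta
    by (intro sum.cong refl) (use d in \<open>auto simp: diagonal_matrix_def\<close>)
  then show ?thesis by simp
qed

theorem lemma3:
  fixes A Rt D R :: "real^'n^'n"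
  assumes "diagonal_matrix A" and "diagonal_matrix D" and "orthogonal_matrix Rt"
  shows "trace (A ** R ** D ** Rt)
    \<le> (\<Sum>j\<in>UNIV. \<bar>D $ j $ j\<bar> * sqrt (\<Sum>i\<in>UNIV. (A $ i $ i)^2 * (R $ i $ j)^2))"
proof -
  have e: "(A ** R ** D ** Rt) $ i $ i = (\<Sum>j\<in>UNIV. D$j$j * (A$i$i * R$i$j * Rt$j$i))" for i
  proof -
    have "(A ** R ** D ** Rt) $ i $ i = (\<Sum>j\<in>UNIV. (A ** R ** D)$i$j * Rt$j$i)"
      by (simp only: matrix_matrix_mult_def vec_lambda_beta)
    also have "\<dots> = (\<Sum>j\<in>UNIV. D$j$j * (A$i$i * R$i$j * Rt$j$i))"
      by (rule sum.cong) (simp_all only: diag_right[OF assms(2)] diag_left[OF assms(1)] mult_ac)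
    finally show ?thesis .
  qed
  have "trace (A ** R ** D ** Rt) = (\<Sum>i\<in>UNIV. \<Sum>j\<in>UNIV. D$j$j * (A$i$i * R$i$j * Rt$j$i))"
    unfolding trace_def e ..
  also have "\<dots> = (\<Sum>j\<in>UNIV. \<Sum>i\<in>UNIV. D$j$j * (A$i$i * R$i$j * Rt$j$i))"
    by (rule sum.swap)
  also have "\<dots> = (\<Sum>j\<in>UNIV. D$j$j * (\<Sum>i\<in>UNIV. A$i$i * R$i$j * Rt$j$i))"
    by (simp only: sum_distrib_left)
  also have "\<dots> \<le> (\<Sum>j\<in>UNIV. \<bar>D $ j $ j\<bar> * sqrt (\<Sum>i\<in>UNIV. (A $ i $ i)^2 * (R $ i $ j)^2))"
  proof (rule sum_mono)
    fix j
    define x :: "real^'n" where "x = (\<chi> i. A$i$i * R$i$j)"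
    define y :: "real^'n" where "y = (\<chi> i. Rt$j$i)"
    have ny: "norm y = 1" using assms(3) unfolding orthogonal_matrix_orthonormal_rows y_def row_def
      by blast
    have "\<bar>\<Sum>i\<in>UNIV. A$i$i * R$i$j * Rt$j$i\<bar> = \<bar>x \<bullet> y\<bar>"
      by (simp add: x_def y_def inner_vec_def)
    also have "\<dots> \<le> norm x * norm y" by (rule Cauchy_Schwarz_ineq2)
    also have "\<dots> = norm x" by (simp add: ny)
    also have "\<dots> = sqrt (\<Sum>i\<in>UNIV. (A $ i $ i)^2 * (R $ i $ j)^2)"
      unfolding norm_eq_sqrt_inner inner_vec_def x_def
      by (simp add: power2_eq_square mult_ac)
    finally have c: "\<bar>\<Sum>i\<in>UNIV. A$i$i * R$i$j * Rt$j$i\<bar> \<le> sqrt (\<Sum>i\<in>UNIV. (A $ i $ i)^2 * (R $ i $ j)^2)" .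
    have "D$j$j * (\<Sum>i\<in>UNIV. A$i$i * R$i$j * Rt$j$i) \<le> \<bar>D$j$j * (\<Sum>i\<in>UNIV. A$i$i * R$i$j * Rt$j$i)\<bar>"
      by simp
    also have "\<dots> = \<bar>D$j$j\<bar> * \<bar>\<Sum>i\<in>UNIV. A$i$i * R$i$j * Rt$j$i\<bar>" by (simp add: abs_mult)
    also have "\<dots> \<le> \<bar>D$j$j\<bar> * sqrt (\<Sum>i\<in>UNIV. (A $ i $ i)^2 * (R $ i $ j)^2)"
      by (rule mult_left_mono[OF c]) simp
    finally show "D$j$j * (\<Sum>i\<in>UNIV. A$i$i * R$i$j * Rt$j$i) \<le> \<bar>D$j$j\<bar> * sqrt (\<Sum>i\<in>UNIV. (A $ i $ i)^2 * (R $ i $ j)^2)" .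
  qed
  finally show ?thesis .
qed

end
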